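(* For any frame $L$, the poset $\mathrm{F}(L)$ is Dedekind complete, i.e. every non-empty subset bounded above has a supremum in $\mathrm{F}(L)$ (and every non-empty subset bounded below has an infimum).
   Context: $\mathbb{Q}$ is the rationals. A sublocale of $L$ is a subset closed under arbitrary meets and such that $x\to s\in S$ for $x\in L$, $s\in S$; $\mathrm{coS}(L)$ is the frame of sublocales ordered by reverse inclusion, with pseudocomplement $^\ast$. The frame $\mathfrak{L}(\overline{\mathbb{IR}})$ is presented by generators $(r,\textsf{---})$, $(\textsf{---},s)$ ($r,s\in\mathbb{Q}$) with relations (r1) $(r,\textsf{---})\wedge(\textsf{---},s)=0$ for $r\ge s$; (r3) $(r,\textsf{---})=\bigvee_{s>r}(s,\textsf{---})$; (r4) $(\textsf{---},s)=\bigvee_{r<s}(\textsf{---},r)$. $\overline{\mathrm{F}}(L)$ is the set of frame homomorphisms $f\colon\mathfrak{L}(\overline{\mathbb{IR}})\to\mathrm{coS}(L)$ with $f(r,\textsf{---})^\ast\le f(\textsf{---},s)$ and $f(\textsf{---},s)^\ast\le f(r,\textsf{---})$ for $r<s$, ordered by $f\le g$ iff $f(r,\textsf{---})\le g(r,\textsf{---})$ and $g(\textsf{---},s)\le f(\textsf{---},s)$; it is a complete lattice with top $\boldsymbol{+\infty}$ ($(r,\textsf{---})\mapsto1$, $(\textsf{---},s)\mapsto0$) and bottom $\boldsymbol{-\infty}$ ($(r,\textsf{---})\mapsto0$, $(\textsf{---},s)\mapsto1$). $\mathrm{F}(L)$ is the subposet of $f\in\overline{\mathrm{F}}(L)$ such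 that for all $g\in\overline{\mathrm{F}}(L)$, $f\vee g=\boldsymbol{+\infty}\Rightarrow g=\boldsymbol{+\infty}$ and $f\wedge g=\boldsymbol{-\infty}\Rightarrow g=\boldsymbol{-\infty}$. *)

theory Defs
  imports Complex_Main
begin

text \<open>A frame is a complete lattice satisfying x \<sqinter> \<Squnion>S = \<Squnion>{x \<sqinter> s | s \<in> S};
  this is imposed as a hypothesis of the theorem on a type of class complete_lattice.\<close>

definition is_frame :: "'a::complete_lattice itself \<Rightarrow> bool" where
  "is_frame _ \<longleftrightarrow> (\<forall>(x::'a) S. inf x (Sup S) = Sup (inf x ` S))"

definition frame_imp :: "'a::complete_lattice \<Rightarrow> 'a \<Rightarrow> 'a" where
  "frame_imp x s = Sup {y. inf y x \<le> s}"

definition is_sublocale :: "'a::complete_lattice set \<Rightarrow> bool" where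
  "is_sublocale S \<longleftrightarrow> (\<forall>T. T \<subseteq> S \<longrightarrow> Inf T \<in> S) \<and>
                       (\<forall>x s. s \<in> S \<longrightarrow> frame_imp x s \<in> S)"

text \<open>coS(L): sublocales ordered by reverse inclusion.\<close>
definition cos_le :: "'a set \<Rightarrow> 'a set \<Rightarrow> bool" where
  "cos_le S T \<longleftrightarrow> T \<subseteq> S"

definition cos_top :: "'a::complete_lattice set" where
  "cos_top = {top}"

definition cos_bot :: "'a set" where
  "cos_bot = UNIV"

text \<open>Binary meet in coS(L) = join of sublocales = sublocale generated by the union.\<close>
definition cos_inf :: "'a::complete_lattice set \<Rightarrow> 'a set \<Rightarrow> 'a set" where
  "cos_inf S T = \<Inter>{U. is_sublocale U \<and> S \<union> T \<subseteq> U}"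

definition cos_Sup :: "'a set set \<Rightarrow> 'a set" where
  "cos_Sup \<S> = \<Inter>\<S>"

definition cos_pc :: "'a::complete_lattice set \<Rightarrow> 'a set" where
  "cos_pc S = cos_Sup {T. is_sublocale T \<and> cos_inf S T = cos_bot}"

text \<open>A frame homomorphism from the presented frame L(IR-bar) to coS(L) is the same as an
  assignment of the generators (r,---) and (---,s) satisfying relations (r1),(r3),(r4);
  we represent f by the pair (u,d) with u r = f(r,---), d s = f(---,s).\<close>
type_synonym 'a rfun = "(rat \<Rightarrow> 'a set) \<times> (rat \<Rightarrow> 'a set)"

definition Fbar :: "('a::complete_lattice) rfun set" where
  "Fbar = {(u, d).
     (\<forall>r. is_sublocale (u r)) \<and> (\<forall>s. is_sublocale (d s)) \<and>
     (\<forall>r s. s \<le> r \<longrightarrow> cos_inf (u r) (d s) = cos_bot) \<and>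
     (\<forall>r. u r = cos_Sup (u ` {s. r < s})) \<and>
     (\<forall>s. d s = cos_Sup (d ` {r. r < s})) \<and>
     (\<forall>r s. r < s \<longrightarrow> cos_le (cos_pc (u r)) (d s) \<and> cos_le (cos_pc (d s)) (u r))}"

definition fle :: "'a rfun \<Rightarrow> 'a rfun \<Rightarrow> bool" where
  "fle f g \<longleftrightarrow> (\<forall>r. cos_le (fst f r) (fst g r)) \<and> (\<forall>s. cos_le (snd g s) (snd f s))"

definition pinf :: "'a::complete_lattice rfun" where
  "pinf = (\<lambda>_. cos_top, \<lambda>_. cos_bot)"

definition minf :: "'a::complete_lattice rfun" where
  "minf = (\<lambda>_. cos_bot, \<lambda>_. cos_top)"

definition is_lub_in :: "'a rfun set \<Rightarrow> 'a rfun set \<Rightarrow> 'a rfun \<Rightarrow> bool" where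
  "is_lub_in P A x \<longleftrightarrow> x \<in> P \<and> (\<forall>a\<in>A. fle a x) \<and> (\<forall>y\<in>P. (\<forall>a\<in>A. fle a y) \<longrightarrow> fle x y)"

definition is_glb_in :: "'a rfun set \<Rightarrow> 'a rfun set \<Rightarrow> 'a rfun \<Rightarrow> bool" where
  "is_glb_in P A x \<longleftrightarrow> x \<in> P \<and> (\<forall>a\<in>A. fle x a) \<and> (\<forall>y\<in>P. (\<forall>a\<in>A. fle y a) \<longrightarrow> fle y x)"

definition FL :: "('a::complete_lattice) rfun set" where
  "FL = {f \<in> Fbar. \<forall>g\<in>Fbar.
          (is_lub_in Fbar {f, g} pinf \<longrightarrow> g = pinf) \<and>
          (is_glb_in Fbar {f, g} minf \<longrightarrow> g = minf)}"

end

theory Submission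
  imports Defs
begin


lemma imp_adj:
  assumes fr: "is_frame TYPE('a::complete_lattice)"
  shows "(y::'a) \<le> frame_imp x s \<longleftrightarrow> inf y x \<le> s"
proof
  assume "inf y x \<le> s" thus "y \<le> frame_imp x s" unfolding frame_imp_def by (auto intro: Sup_upper)
next
  assume "y \<le> frame_imp x s"
  hence "inf y x \<le> inf (frame_imp x s) x" by (rule inf_mono) simp
  also have "\<dots> = inf x (Sup {y. inf y x \<le> s})" by (simp add: frame_imp_def inf_commute)
  also have "\<dots> = Sup (inf x ` {y. inf y x \<le> s})" using fr unfolding is_frame_def by blast
  also have "\<dots> \<le> s" by (auto intro!: Sup_least simp: inf_commute)
  finally show "inf y x \<le> s" .
qed

lemma imp_mp:
  assumes fr: "is_frame TYPE('a::complete_lattice)"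
  shows "inf (frame_imp x s) x \<le> (s::'a)"
  using imp_adj[OF fr] by blast

lemma sub_Inter:
  assumes H: "\<And>S. S \<in> SS \<Longrightarrow> is_sublocale S"
  shows "is_sublocale (\<Inter>SS)"
  unfolding is_sublocale_def
proof (intro conjI allI impI)
  fix T assume T: "T \<subseteq> \<Inter>SS"
  show "Inf T \<in> \<Inter>SS"
  proof
    fix S assume S: "S \<in> SS"
    have "T \<subseteq> S" using T S by blast
    thus "Inf T \<in> S" using H[OF S] unfolding is_sublocale_def by blast
  qed
next
  fix x s assume s: "s \<in> \<Inter>SS"
  show "frame_imp x s \<in> \<Inter>SS"
  proof
    fix S assume S: "S \<in> SS"
    have "s \<in> S" using s S by blast
    thus "frame_imp x s \<in> S" using H[OF S] unfolding is_sublocale_def by blast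
  qed
qed

lemma sub_Inf: "is_sublocale S \<Longrightarrow> T \<subseteq> S \<Longrightarrow> Inf T \<in> S"
  unfolding is_sublocale_def by simp

lemma sub_imp: "is_sublocale S \<Longrightarrow> s \<in> S \<Longrightarrow> frame_imp x s \<in> S"
  unfolding is_sublocale_def by simp

lemma sub_top: "is_sublocale S \<Longrightarrow> top \<in> S"
  using sub_Inf[of S "{}"] by simp

lemma sub_inf: "is_sublocale S \<Longrightarrow> a \<in> S \<Longrightarrow> b \<in> S \<Longrightarrow> inf a b \<in> S"
  using sub_Inf[of S "{a,b}"] by simp

lemma cos_inf_sub: "is_sublocale (cos_inf S T)"
  unfolding cos_inf_def
proof (rule sub_Inter)
  fix U assume "U \<in> {U. is_sublocale U \<and> S \<union> T \<subseteq> U}"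
  thus "is_sublocale U" by simp
qed

lemma cos_inf_comm: "cos_inf S T = cos_inf T S"
proof -
  have "S \<union> T = T \<union> S" by (rule Un_commute)
  thus ?thesis unfolding cos_inf_def by (simp only:)
qed

lemma cos_inf_mono: "S \<subseteq> S' \<Longrightarrow> cos_inf S T \<subseteq> cos_inf S' T"
proof -
  assume "S \<subseteq> S'"
  hence "{U. is_sublocale U \<and> S' \<union> T \<subseteq> U} \<subseteq> {U. is_sublocale U \<and> S \<union> T \<subseteq> U}" by auto
  thus ?thesis unfolding cos_inf_def by (rule Inter_anti_mono)
qed

lemma imp_inf:
  assumes fr: "is_frame TYPE('a::complete_lattice)"
  shows "frame_imp x (inf s t) = inf (frame_imp x s) (frame_imp x (t::'a))"
proof (rule order_antisym)
  show "frame_imp x (inf s t) \<le> inf (frame_imp x s) (frame_imp x t)"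
    using imp_mp[OF fr, of x "inf s t"] by (simp add: imp_adj[OF fr])
  show "inf (frame_imp x s) (frame_imp x t) \<le> frame_imp x (inf s t)"
  proof -
    have "inf (inf (frame_imp x s) (frame_imp x t)) x \<le> inf (frame_imp x s) x"
      by (meson inf_le1 inf_mono order_refl)
    also have "\<dots> \<le> s" by (rule imp_mp[OF fr])
    finally have 1: "inf (inf (frame_imp x s) (frame_imp x t)) x \<le> s" .
    have "inf (inf (frame_imp x s) (frame_imp x t)) x \<le> inf (frame_imp x t) x"
      by (meson inf_le2 inf_mono order_refl)
    also have "\<dots> \<le> t" by (rule imp_mp[OF fr])
    finally have 2: "inf (inf (frame_imp x s) (frame_imp x t)) x \<le> t" .
    show ?thesis unfolding imp_adj[OF fr] using 1 2 by simp
  qed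
qed

lemma cos_inf_char:
  assumes fr: "is_frame TYPE('a::complete_lattice)"
    and S: "is_sublocale (S::'a set)" and T: "is_sublocale T"
  shows "cos_inf S T = {inf s t | s t. s \<in> S \<and> t \<in> T}"
proof
  let ?M = "{inf s t | s t. s \<in> S \<and> t \<in> T}"
  have M: "is_sublocale ?M"
    unfolding is_sublocale_def
  proof (intro conjI allI impI)
    fix X assume X: "X \<subseteq> ?M"
    hence "\<forall>x\<in>X. \<exists>p. fst p \<in> S \<and> snd p \<in> T \<and> x = inf (fst p) (snd p)" by fastforce
    then obtain h where h: "\<forall>x\<in>X. fst (h x) \<in> S \<and> snd (h x) \<in> T \<and> x = inf (fst (h x)) (snd (h x))"
      by metis
    have eq: "Inf X = inf (Inf ((\<lambda>x. fst (h x)) ` X)) (Inf ((\<lambda>x. snd (h x)) ` X))"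
    proof (rule order_antisym)
      show "Inf X \<le> inf (Inf ((\<lambda>x. fst (h x)) ` X)) (Inf ((\<lambda>x. snd (h x)) ` X))"
      proof (rule le_infI)
        show "Inf X \<le> Inf ((\<lambda>x. fst (h x)) ` X)"
        proof (rule Inf_greatest)
          fix y assume "y \<in> (\<lambda>x. fst (h x)) ` X"
          then obtain x where x: "x \<in> X" "y = fst (h x)" by blast
          have "Inf X \<le> x" using x(1) by (rule Inf_lower)
          also have "x \<le> fst (h x)" using h x(1) by (metis inf_le1)
          finally show "Inf X \<le> y" using x(2) by simp
        qed
        show "Inf X \<le> Inf ((\<lambda>x. snd (h x)) ` X)"
        proof (rule Inf_greatest)
          fix y assume "y \<in> (\<lambda>x. snd (h x)) ` X"
          then obtain x where x: "x \<in> X" "y = snd (h x)" by blast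
          have "Inf X \<le> x" using x(1) by (rule Inf_lower)
          also have "x \<le> snd (h x)" using h x(1) by (metis inf_le2)
          finally show "Inf X \<le> y" using x(2) by simp
        qed
      qed
      show "inf (Inf ((\<lambda>x. fst (h x)) ` X)) (Inf ((\<lambda>x. snd (h x)) ` X)) \<le> Inf X"
      proof (rule Inf_greatest)
        fix x assume "x \<in> X"
        hence "inf (Inf ((\<lambda>x. fst (h x)) ` X)) (Inf ((\<lambda>x. snd (h x)) ` X)) \<le> inf (fst (h x)) (snd (h x))"
          by (intro inf_mono) (auto intro: Inf_lower)
        thus "inf (Inf ((\<lambda>x. fst (h x)) ` X)) (Inf ((\<lambda>x. snd (h x)) ` X)) \<le> x" using h \<open>x\<in>X\<close> by metis
      qed
    qed
    have "Inf ((\<lambda>x. fst (h x)) ` X) \<in> S" by (rule sub_Inf[OF S]) (use h in auto)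
    moreover have "Inf ((\<lambda>x. snd (h x)) ` X) \<in> T" by (rule sub_Inf[OF T]) (use h in auto)
    ultimately show "Inf X \<in> ?M" using eq by blast
  next
    fix x s assume "s \<in> ?M"
    then obtain a b where "a \<in> S" "b \<in> T" "s = inf a b" by blast
    moreover have "frame_imp x a \<in> S" by (rule sub_imp[OF S \<open>a \<in> S\<close>])
    moreover have "frame_imp x b \<in> T" by (rule sub_imp[OF T \<open>b \<in> T\<close>])
    ultimately show "frame_imp x s \<in> ?M" using imp_inf[OF fr, of x a b] by blast
  qed
  have "S \<union> T \<subseteq> ?M"
  proof
    fix x assume "x \<in> S \<union> T"
    thus "x \<in> ?M"
    proof
      assume "x \<in> S" thus ?thesis using sub_top[OF T] by (metis (mono_tags, lifting) inf_top_right mem_Collect_eq)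
    next
      assume "x \<in> T" thus ?thesis using sub_top[OF S] by (metis (mono_tags, lifting) inf_top_left mem_Collect_eq)
    qed
  qed
  thus "cos_inf S T \<subseteq> ?M" using M unfolding cos_inf_def by blast
  show "?M \<subseteq> cos_inf S T"
  proof
    fix z assume "z \<in> ?M"
    then obtain a b where ab: "a \<in> S" "b \<in> T" "z = inf a b" by blast
    show "z \<in> cos_inf S T" unfolding cos_inf_def
    proof
      fix U assume "U \<in> {U. is_sublocale U \<and> S \<union> T \<subseteq> U}"
      hence U: "is_sublocale U" "S \<subseteq> U" "T \<subseteq> U" by auto
      show "z \<in> U" using sub_inf[OF U(1)] U ab by blast
    qed
  qed
qed



lemma coframe:
  assumes fr: "is_frame TYPE('a::complete_lattice)"
    and S: "is_sublocale (S::'a set)" and TT: "\<And>T. T \<in> TT \<Longrightarrow> is_sublocale T"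
    and all: "\<And>T. T \<in> TT \<Longrightarrow> cos_inf T S = UNIV"
  shows "cos_inf (\<Inter>TT) S = UNIV"
proof -
  have IT: "is_sublocale (\<Inter>TT)" using TT by (rule sub_Inter)
  have "x \<in> cos_inf (\<Inter>TT) S" for x
  proof -
    define s0 where "s0 = Inf {s\<in>S. x \<le> s}"
    have s0S: "s0 \<in> S" unfolding s0_def by (rule sub_Inf[OF S]) blast
    have xs0: "x \<le> s0" unfolding s0_def by (auto intro: Inf_greatest)
    define t where "t = frame_imp s0 x"
    have "t \<in> T" if T: "T \<in> TT" for T
    proof -
      have "x \<in> cos_inf T S" using all[OF T] by simp
      then obtain ti si where tsi: "ti \<in> T" "si \<in> S" "x = inf ti si"
        using cos_inf_char[OF fr TT[OF T] S] by blast
      have "x \<le> si" using tsi by simp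
      hence "s0 \<le> si" unfolding s0_def using tsi(2) by (auto intro: Inf_lower)
      have "t = frame_imp s0 ti"
      proof (rule order_antisym)
        show "t \<le> frame_imp s0 ti" unfolding imp_adj[OF fr]
          using imp_mp[OF fr, of s0 x] unfolding t_def tsi(3) by (meson le_inf_iff)
        have "inf (frame_imp s0 ti) s0 \<le> ti" by (rule imp_mp[OF fr])
        moreover have "inf (frame_imp s0 ti) s0 \<le> si" using \<open>s0 \<le> si\<close> by (meson inf_le2 order_trans)
        ultimately show "frame_imp s0 ti \<le> t" unfolding t_def imp_adj[OF fr] tsi(3) by simp
      qed
      thus ?thesis using sub_imp[OF TT[OF T] tsi(1), of s0] by simp
    qed
    hence tI: "t \<in> \<Inter>TT" by blast
    have "x = inf t s0"
    proof (rule order_antisym)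
      have "inf x s0 \<le> x" by simp
      hence "x \<le> t" unfolding t_def imp_adj[OF fr] .
      thus "x \<le> inf t s0" using xs0 by simp
      show "inf t s0 \<le> x" unfolding t_def by (rule imp_mp[OF fr])
    qed
    thus ?thesis using cos_inf_char[OF fr IT S] tI s0S by blast
  qed
  thus ?thesis by blast
qed

lemma pc_sub: "is_sublocale (cos_pc S)"
  unfolding cos_pc_def cos_Sup_def by (rule sub_Inter) blast

lemma pc_least: "is_sublocale T \<Longrightarrow> cos_inf S T = UNIV \<Longrightarrow> cos_pc S \<subseteq> T"
  unfolding cos_pc_def cos_Sup_def cos_bot_def by blast

lemma pc_compl:
  assumes fr: "is_frame TYPE('a::complete_lattice)" and S: "is_sublocale (S::'a set)"
  shows "cos_inf S (cos_pc S) = UNIV"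
proof -
  have "cos_inf (cos_pc S) S = UNIV"
    unfolding cos_pc_def cos_Sup_def
    by (rule coframe[OF fr S]) (auto simp: cos_bot_def cos_inf_comm)
  thus ?thesis by (simp add: cos_inf_comm)
qed

lemma pc_anti:
  assumes fr: "is_frame TYPE('a::complete_lattice)" and S: "is_sublocale (S::'a set)"
    and le: "S \<subseteq> S'"
  shows "cos_pc S' \<subseteq> cos_pc S"
proof (rule pc_least[OF pc_sub])
  have "cos_inf S (cos_pc S) \<subseteq> cos_inf S' (cos_pc S)" using le by (rule cos_inf_mono)
  thus "cos_inf S' (cos_pc S) = UNIV" using pc_compl[OF fr S] by blast
qed

lemma Fbar_iff: "(u, d) \<in> Fbar \<longleftrightarrow>
   (\<forall>r. is_sublocale (u r)) \<and> (\<forall>s. is_sublocale (d s)) \<and>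
   (\<forall>r s. s \<le> r \<longrightarrow> cos_inf (u r) (d s) = UNIV) \<and>
   (\<forall>r. u r = (\<Inter>s\<in>{s. r < s}. u s)) \<and>
   (\<forall>s. d s = (\<Inter>r\<in>{r. r < s}. d r)) \<and>
   (\<forall>r s. r < s \<longrightarrow> d s \<subseteq> cos_pc (u r) \<and> u r \<subseteq> cos_pc (d s))"
  unfolding Fbar_def cos_le_def cos_Sup_def cos_bot_def by (simp only: mem_Collect_eq prod.case)

lemma Fbar_D:
  assumes "(u, d) \<in> Fbar"
  shows "\<And>r. is_sublocale (u r)" "\<And>s. is_sublocale (d s)"
    "\<And>r s. s \<le> r \<Longrightarrow> cos_inf (u r) (d s) = UNIV"
    "\<And>r. u r = (\<Inter>s\<in>{s. r < s}. u s)"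
    "\<And>s. d s = (\<Inter>r\<in>{r. r < s}. d r)"
    "\<And>r s. r < s \<Longrightarrow> d s \<subseteq> cos_pc (u r)"
    "\<And>r s. r < s \<Longrightarrow> u r \<subseteq> cos_pc (d s)"
proof -
  note H = assms[unfolded Fbar_iff]
  note H1 = conjunct1[OF H]
  note H2 = conjunct1[OF conjunct2[OF H]]
  note H3 = conjunct1[OF conjunct2[OF conjunct2[OF H]]]
  note H4 = conjunct1[OF conjunct2[OF conjunct2[OF conjunct2[OF H]]]]
  note H5 = conjunct1[OF conjunct2[OF conjunct2[OF conjunct2[OF conjunct2[OF H]]]]]
  note H6 = conjunct2[OF conjunct2[OF conjunct2[OF conjunct2[OF conjunct2[OF H]]]]]
  show "\<And>r. is_sublocale (u r)" by (rule spec[OF H1])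
  show "\<And>s. is_sublocale (d s)" by (rule spec[OF H2])
  show "\<And>r s. s \<le> r \<Longrightarrow> cos_inf (u r) (d s) = UNIV" by (rule mp[OF spec[OF spec[OF H3]]])
  show "\<And>r. u r = (\<Inter>s\<in>{s. r < s}. u s)" by (rule spec[OF H4])
  show "\<And>s. d s = (\<Inter>r\<in>{r. r < s}. d r)" by (rule spec[OF H5])
  show "\<And>r s. r < s \<Longrightarrow> d s \<subseteq> cos_pc (u r)" by (rule conjunct1[OF mp[OF spec[OF spec[OF H6]]]])
  show "\<And>r s. r < s \<Longrightarrow> u r \<subseteq> cos_pc (d s)" by (rule conjunct2[OF mp[OF spec[OF spec[OF H6]]]])
qed

lemma Fbar_I:
  assumes A1: "\<And>r. is_sublocale (u r)" and A2: "\<And>s. is_sublocale (d s)"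
    and A3: "\<And>r s. s \<le> r \<Longrightarrow> cos_inf (u r) (d s) = UNIV"
    and A4: "\<And>r. u r = (\<Inter>s\<in>{s. r < s}. u s)"
    and A5: "\<And>s. d s = (\<Inter>r\<in>{r. r < s}. d r)"
    and A6: "\<And>r s. r < s \<Longrightarrow> d s \<subseteq> cos_pc (u r)"
    and A7: "\<And>r s. r < s \<Longrightarrow> u r \<subseteq> cos_pc (d s)"
  shows "(u, d) \<in> Fbar"
  unfolding Fbar_iff
  apply (intro conjI allI impI)
  apply (rule A1)
  apply (rule A2)
  apply (erule A3)
  apply (rule A4)
  apply (rule A5)
  apply (erule A6)
  apply (erule A7)
  done

lemma rep:
  assumes fr: "is_frame TYPE('a::complete_lattice)" and f: "(u, d) \<in> (Fbar :: 'a rfun set)"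
  shows "d s = (\<Inter>r\<in>{r. r < s}. cos_pc (u r))" "u r = (\<Inter>s\<in>{s. r < s}. cos_pc (d s))"
proof -
  note F = Fbar_D[OF f]
  show "d s = (\<Inter>r\<in>{r. r < s}. cos_pc (u r))"
  proof
    show "d s \<subseteq> (\<Inter>r\<in>{r. r < s}. cos_pc (u r))" using F(6) by blast
    have "cos_pc (u r) \<subseteq> d r" for r by (rule pc_least[OF F(2) F(3)]) simp
    hence "(\<Inter>r\<in>{r. r < s}. cos_pc (u r)) \<subseteq> (\<Inter>r\<in>{r. r < s}. d r)" by blast
    also have "\<dots> = d s" by (rule F(5)[symmetric])
    finally show "(\<Inter>r\<in>{r. r < s}. cos_pc (u r)) \<subseteq> d s" .
  qed
  show "u r = (\<Inter>s\<in>{s. r < s}. cos_pc (d s))"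
  proof
    show "u r \<subseteq> (\<Inter>s\<in>{s. r < s}. cos_pc (d s))" using F(7) by blast
    have "cos_pc (d s) \<subseteq> u s" for s by (rule pc_least[OF F(1)], subst cos_inf_comm, rule F(3)) simp
    hence "(\<Inter>s\<in>{s. r < s}. cos_pc (d s)) \<subseteq> (\<Inter>s\<in>{s. r < s}. u s)" by blast
    also have "\<dots> = u r" by (rule F(4)[symmetric])
    finally show "(\<Inter>s\<in>{s. r < s}. cos_pc (d s)) \<subseteq> u r" .
  qed
qed

lemma dense_lt: "(\<Inter>r\<in>{r. r < s}. \<Inter>t\<in>{t. t < r}. X t) = (\<Inter>t\<in>{t::rat. t < s}. X t)"
proof
  show "(\<Inter>t\<in>{t::rat. t < s}. X t) \<subseteq> (\<Inter>r\<in>{r. r < s}. \<Inter>t\<in>{t. t < r}. X t)"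
    by auto
  show "(\<Inter>r\<in>{r. r < s}. \<Inter>t\<in>{t. t < r}. X t) \<subseteq> (\<Inter>t\<in>{t::rat. t < s}. X t)"
  proof
    fix x assume x: "x \<in> (\<Inter>r\<in>{r. r < s}. \<Inter>t\<in>{t. t < r}. X t)"
    show "x \<in> (\<Inter>t\<in>{t::rat. t < s}. X t)"
    proof
      fix t assume "t \<in> {t. t < s}"
      then obtain r where "t < r" "r < s" using dense by auto
      thus "x \<in> X t" using x by blast
    qed
  qed
qed

lemma dense_gt: "(\<Inter>s\<in>{s. r < s}. \<Inter>t\<in>{t. s < t}. X t) = (\<Inter>t\<in>{t::rat. r < t}. X t)"
proof
  show "(\<Inter>t\<in>{t::rat. r < t}. X t) \<subseteq> (\<Inter>s\<in>{s. r < s}. \<Inter>t\<in>{t. s < t}. X t)"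
    by auto
  show "(\<Inter>s\<in>{s. r < s}. \<Inter>t\<in>{t. s < t}. X t) \<subseteq> (\<Inter>t\<in>{t::rat. r < t}. X t)"
  proof
    fix x assume x: "x \<in> (\<Inter>s\<in>{s. r < s}. \<Inter>t\<in>{t. s < t}. X t)"
    show "x \<in> (\<Inter>t\<in>{t::rat. r < t}. X t)"
    proof
      fix t assume "t \<in> {t. r < t}"
      then obtain s where "r < s" "s < t" using dense by auto
      thus "x \<in> X t" using x by blast
    qed
  qed
qed

lemma fle_iff: "fle f g \<longleftrightarrow> (\<forall>r. fst g r \<subseteq> fst f r) \<and> (\<forall>s. snd f s \<subseteq> snd g s)"
  unfolding fle_def cos_le_def by simp



lemma cos_inf_mono2: "T \<subseteq> T' \<Longrightarrow> cos_inf S T \<subseteq> cos_inf S T'"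
  using cos_inf_mono cos_inf_comm by metis

lemma Fbar_pair: "a \<in> Fbar \<Longrightarrow> (fst a, snd a) \<in> Fbar" by simp

definition lubU :: "('a::complete_lattice) rfun set \<Rightarrow> rat \<Rightarrow> 'a set" where
  "lubU A r = (\<Inter>a\<in>A. fst a r)"
definition lubD :: "('a::complete_lattice) rfun set \<Rightarrow> rat \<Rightarrow> 'a set" where
  "lubD A s = (\<Inter>r\<in>{r. r < s}. cos_pc (lubU A r))"
definition lubUU :: "('a::complete_lattice) rfun set \<Rightarrow> rat \<Rightarrow> 'a set" where
  "lubUU A r = (\<Inter>s\<in>{s. r < s}. cos_pc (lubD A s))"

lemma lub_Fbar:
  assumes fr: "is_frame TYPE('a::complete_lattice)" and A: "A \<subseteq> (Fbar :: 'a rfun set)"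
  shows "(lubUU A, lubD A) \<in> Fbar \<and> (\<forall>a\<in>A. fle a (lubUU A, lubD A)) \<and>
         (\<forall>g\<in>Fbar. (\<forall>a\<in>A. fle a g) \<longrightarrow> fle (lubUU A, lubD A) g)"
proof -
  have aF: "\<And>a. a \<in> A \<Longrightarrow> (fst a, snd a) \<in> Fbar" using A by auto
  have subU: "is_sublocale (lubU A r)" for r
    unfolding lubU_def by (rule sub_Inter) (auto dest: aF Fbar_D(1))
  have subD: "is_sublocale (lubD A s)" for s
    unfolding lubD_def by (rule sub_Inter) (auto intro: pc_sub)
  have subUU: "is_sublocale (lubUU A r)" for r
    unfolding lubUU_def by (rule sub_Inter) (auto intro: pc_sub)
  have ad: "snd a s \<subseteq> lubD A s" if a: "a \<in> A" for a s
  proof -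
    have "cos_pc (fst a r) \<subseteq> cos_pc (lubU A r)" for r
      by (rule pc_anti[OF fr subU]) (use a in \<open>auto simp: lubU_def\<close>)
    thus ?thesis unfolding rep(1)[OF fr aF[OF a], of s] lubD_def by blast
  qed
  have au: "lubUU A r \<subseteq> fst a r" if a: "a \<in> A" for a r
  proof -
    have "cos_pc (lubD A s) \<subseteq> cos_pc (snd a s)" for s
      by (rule pc_anti[OF fr Fbar_D(2)[OF aF[OF a]] ad[OF a]])
    thus ?thesis unfolding rep(2)[OF fr aF[OF a], of r] lubUU_def by blast
  qed
  have UUU: "lubUU A r \<subseteq> lubU A r" for r using au unfolding lubU_def by blast
  have Dmono: "lubD A t \<subseteq> lubD A s" if "s \<le> t" for s t
    unfolding lubD_def using that by auto
  have inF: "(lubUU A, lubD A) \<in> Fbar"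
  proof (rule Fbar_I[OF subUU subD])
    fix r s :: rat assume sr: "s \<le> r"
    have "cos_inf (\<Inter>((\<lambda>t. cos_pc (lubD A t)) ` {t. r < t})) (lubD A s) = UNIV"
    proof (rule coframe[OF fr subD])
      fix T assume "T \<in> (\<lambda>t. cos_pc (lubD A t)) ` {t. r < t}"
      then obtain t where t: "r < t" "T = cos_pc (lubD A t)" by blast
      show "is_sublocale T" using t pc_sub by simp
      have "cos_inf (cos_pc (lubD A t)) (lubD A t) \<subseteq> cos_inf (cos_pc (lubD A t)) (lubD A s)"
        by (rule cos_inf_mono2[OF Dmono]) (use t sr in simp)
      moreover have "cos_inf (cos_pc (lubD A t)) (lubD A t) = UNIV"
        using pc_compl[OF fr subD] cos_inf_comm by metis
      ultimately show "cos_inf T (lubD A s) = UNIV" using t by blast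
    qed
    thus "cos_inf (lubUU A r) (lubD A s) = UNIV" unfolding lubUU_def .
  next
    fix r show "lubUU A r = (\<Inter>s\<in>{s. r < s}. lubUU A s)"
      unfolding lubUU_def by (rule dense_gt[symmetric])
  next
    fix s show "lubD A s = (\<Inter>r\<in>{r. r < s}. lubD A r)"
      unfolding lubD_def by (rule dense_lt[symmetric])
  next
    fix r s :: rat assume rs: "r < s"
    have "lubD A s \<subseteq> cos_pc (lubU A r)" unfolding lubD_def using rs by blast
    also have "\<dots> \<subseteq> cos_pc (lubUU A r)" by (rule pc_anti[OF fr subUU UUU])
    finally show "lubD A s \<subseteq> cos_pc (lubUU A r)" .
  next
    fix r s :: rat assume rs: "r < s"
    show "lubUU A r \<subseteq> cos_pc (lubD A s)" unfolding lubUU_def using rs by blast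
  qed
  have ub: "\<forall>a\<in>A. fle a (lubUU A, lubD A)" using ad au by (simp add: fle_iff)
  have least: "fle (lubUU A, lubD A) g" if g: "g \<in> Fbar" and gu: "\<forall>a\<in>A. fle a g" for g
  proof -
    have gF: "(fst g, snd g) \<in> Fbar" using g by simp
    have "fst g r \<subseteq> lubU A r" for r using gu unfolding lubU_def fle_iff by blast
    hence "cos_pc (lubU A r) \<subseteq> cos_pc (fst g r)" for r by (rule pc_anti[OF fr Fbar_D(1)[OF gF]])
    hence gd: "lubD A s \<subseteq> snd g s" for s unfolding rep(1)[OF fr gF, of s] lubD_def by blast
    hence "cos_pc (snd g s) \<subseteq> cos_pc (lubD A s)" for s by (rule pc_anti[OF fr subD])
    hence "fst g r \<subseteq> lubUU A r" for r unfolding rep(2)[OF fr gF, of r] lubUU_def by blast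
    thus ?thesis using gd by (simp add: fle_iff)
  qed
  show ?thesis using inF ub least by blast
qed

definition glbD :: "('a::complete_lattice) rfun set \<Rightarrow> rat \<Rightarrow> 'a set" where
  "glbD A s = (\<Inter>a\<in>A. snd a s)"
definition glbU :: "('a::complete_lattice) rfun set \<Rightarrow> rat \<Rightarrow> 'a set" where
  "glbU A r = (\<Inter>s\<in>{s. r < s}. cos_pc (glbD A s))"
definition glbDD :: "('a::complete_lattice) rfun set \<Rightarrow> rat \<Rightarrow> 'a set" where
  "glbDD A s = (\<Inter>r\<in>{r. r < s}. cos_pc (glbU A r))"

lemma glb_Fbar:
  assumes fr: "is_frame TYPE('a::complete_lattice)" and A: "A \<subseteq> (Fbar :: 'a rfun set)"
  shows "(glbU A, glbDD A) \<in> Fbar \<and> (\<forall>a\<in>A. fle (glbU A, glbDD A) a) \<and>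
         (\<forall>g\<in>Fbar. (\<forall>a\<in>A. fle g a) \<longrightarrow> fle g (glbU A, glbDD A))"
proof -
  have aF: "\<And>a. a \<in> A \<Longrightarrow> (fst a, snd a) \<in> Fbar" using A by auto
  have subD: "is_sublocale (glbD A s)" for s
    unfolding glbD_def by (rule sub_Inter) (auto dest: aF Fbar_D(2))
  have subU: "is_sublocale (glbU A r)" for r
    unfolding glbU_def by (rule sub_Inter) (auto intro: pc_sub)
  have subDD: "is_sublocale (glbDD A s)" for s
    unfolding glbDD_def by (rule sub_Inter) (auto intro: pc_sub)
  have au: "fst a r \<subseteq> glbU A r" if a: "a \<in> A" for a r
  proof -
    have "cos_pc (snd a s) \<subseteq> cos_pc (glbD A s)" for s
      by (rule pc_anti[OF fr subD]) (use a in \<open>auto simp: glbD_def\<close>)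
    thus ?thesis unfolding rep(2)[OF fr aF[OF a], of r] glbU_def by blast
  qed
  have ad: "glbDD A s \<subseteq> snd a s" if a: "a \<in> A" for a s
  proof -
    have "cos_pc (glbU A r) \<subseteq> cos_pc (fst a r)" for r
      by (rule pc_anti[OF fr Fbar_D(1)[OF aF[OF a]] au[OF a]])
    thus ?thesis unfolding rep(1)[OF fr aF[OF a], of s] glbDD_def by blast
  qed
  have DDD: "glbDD A s \<subseteq> glbD A s" for s using ad unfolding glbD_def by blast
  have Umono: "glbU A t \<subseteq> glbU A r" if "t \<le> r" for r t
    unfolding glbU_def using that by auto
  have inF: "(glbU A, glbDD A) \<in> Fbar"
  proof (rule Fbar_I[OF subU subDD])
    fix r s :: rat assume sr: "s \<le> r"
    have "cos_inf (\<Inter>((\<lambda>t. cos_pc (glbU A t)) ` {t. t < s})) (glbU A r) = UNIV"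
    proof (rule coframe[OF fr subU])
      fix T assume "T \<in> (\<lambda>t. cos_pc (glbU A t)) ` {t. t < s}"
      then obtain t where t: "t < s" "T = cos_pc (glbU A t)" by blast
      show "is_sublocale T" using t pc_sub by simp
      have "cos_inf (cos_pc (glbU A t)) (glbU A t) \<subseteq> cos_inf (cos_pc (glbU A t)) (glbU A r)"
        by (rule cos_inf_mono2[OF Umono]) (use t sr in simp)
      moreover have "cos_inf (cos_pc (glbU A t)) (glbU A t) = UNIV"
        using pc_compl[OF fr subU] cos_inf_comm by metis
      ultimately show "cos_inf T (glbU A r) = UNIV" using t by blast
    qed
    thus "cos_inf (glbU A r) (glbDD A s) = UNIV" unfolding glbDD_def by (simp add: cos_inf_comm)
  next
    fix r show "glbU A r = (\<Inter>s\<in>{s. r < s}. glbU A s)"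
      unfolding glbU_def by (rule dense_gt[symmetric])
  next
    fix s show "glbDD A s = (\<Inter>r\<in>{r. r < s}. glbDD A r)"
      unfolding glbDD_def by (rule dense_lt[symmetric])
  next
    fix r s :: rat assume rs: "r < s"
    show "glbDD A s \<subseteq> cos_pc (glbU A r)" unfolding glbDD_def using rs by blast
  next
    fix r s :: rat assume rs: "r < s"
    have "glbU A r \<subseteq> cos_pc (glbD A s)" unfolding glbU_def using rs by blast
    also have "\<dots> \<subseteq> cos_pc (glbDD A s)" by (rule pc_anti[OF fr subDD DDD])
    finally show "glbU A r \<subseteq> cos_pc (glbDD A s)" .
  qed
  have lb: "\<forall>a\<in>A. fle (glbU A, glbDD A) a" using ad au by (simp add: fle_iff)
  have greatest: "fle g (glbU A, glbDD A)" if g: "g \<in> Fbar" and gl: "\<forall>a\<in>A. fle g a" for g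
  proof -
    have gF: "(fst g, snd g) \<in> Fbar" using g by simp
    have "snd g s \<subseteq> glbD A s" for s using gl unfolding glbD_def fle_iff by blast
    hence "cos_pc (glbD A s) \<subseteq> cos_pc (snd g s)" for s by (rule pc_anti[OF fr Fbar_D(2)[OF gF]])
    hence gu: "glbU A r \<subseteq> fst g r" for r unfolding rep(2)[OF fr gF, of r] glbU_def by blast
    hence "cos_pc (fst g r) \<subseteq> cos_pc (glbU A r)" for r by (rule pc_anti[OF fr subU])
    hence "snd g s \<subseteq> glbDD A s" for s unfolding rep(1)[OF fr gF, of s] glbDD_def by blast
    thus ?thesis using gu by (simp add: fle_iff)
  qed
  show ?thesis using inF lb greatest by blast
qed

lemma fle_trans: "fle f g \<Longrightarrow> fle g h \<Longrightarrow> fle f h"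
  unfolding fle_iff by blast

lemma pinf_top: "y \<in> Fbar \<Longrightarrow> fle y pinf"
proof -
  assume "y \<in> Fbar"
  hence y: "(fst y, snd y) \<in> Fbar" by simp
  have "top \<in> fst y r" for r by (rule sub_top[OF Fbar_D(1)[OF y]])
  thus ?thesis unfolding fle_iff pinf_def cos_top_def cos_bot_def by simp
qed

lemma minf_bot: "y \<in> Fbar \<Longrightarrow> fle minf y"
proof -
  assume "y \<in> Fbar"
  hence y: "(fst y, snd y) \<in> Fbar" by simp
  have "top \<in> snd y r" for r by (rule sub_top[OF Fbar_D(2)[OF y]])
  thus ?thesis unfolding fle_iff minf_def cos_top_def cos_bot_def by simp
qed

lemma FL_sub: "FL \<subseteq> Fbar"
proof
  fix f assume "f \<in> FL" thus "f \<in> Fbar" unfolding FL_def by simp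
qed

lemma FL_both: "f \<in> FL \<Longrightarrow> g \<in> Fbar \<Longrightarrow>
   (is_lub_in Fbar {f, g} pinf \<longrightarrow> g = pinf) \<and> (is_glb_in Fbar {f, g} minf \<longrightarrow> g = minf)"
proof -
  assume f: "f \<in> FL" and g: "g \<in> Fbar"
  have "\<forall>g\<in>Fbar. (is_lub_in Fbar {f, g} pinf \<longrightarrow> g = pinf) \<and> (is_glb_in Fbar {f, g} minf \<longrightarrow> g = minf)"
    using f unfolding FL_def by simp
  thus ?thesis using g by (rule bspec)
qed

lemma FL_lub: "f \<in> FL \<Longrightarrow> g \<in> Fbar \<Longrightarrow> is_lub_in Fbar {f, g} pinf \<Longrightarrow> g = pinf"
  by (rule mp[OF conjunct1[OF FL_both]])

lemma FL_glb: "f \<in> FL \<Longrightarrow> g \<in> Fbar \<Longrightarrow> is_glb_in Fbar {f, g} minf \<Longrightarrow> g = minf"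
  by (rule mp[OF conjunct2[OF FL_both]])

lemma lub_mono_pinf:
  fixes s :: "('a::complete_lattice) rfun"
  assumes h: "is_lub_in Fbar {s, g} pinf" and sb: "fle s b" and bF: "b \<in> Fbar" and g: "g \<in> Fbar"
  shows "is_lub_in Fbar {b, g} pinf"
proof -
  have least: "\<And>y. y \<in> Fbar \<Longrightarrow> fle s y \<Longrightarrow> fle g y \<Longrightarrow> fle pinf y"
    using h unfolding is_lub_in_def by auto
  show ?thesis unfolding is_lub_in_def
  proof (intro conjI)
    show "(pinf :: 'a rfun) \<in> Fbar" using h unfolding is_lub_in_def by (elim conjE)
    show "\<forall>x\<in>{b, g}. fle x pinf" using pinf_top[OF bF] pinf_top[OF g] by simp
    show "\<forall>y\<in>Fbar. (\<forall>x\<in>{b, g}. fle x y) \<longrightarrow> fle pinf y"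
    proof (intro ballI impI)
      fix y assume y: "y \<in> Fbar" and yu: "\<forall>x\<in>{b, g}. fle x y"
      have "fle b y" "fle g y" using yu by simp_all
      thus "fle pinf y" using least[OF y] fle_trans[OF sb] by simp
    qed
  qed
qed

lemma glb_mono_minf:
  fixes s :: "('a::complete_lattice) rfun"
  assumes h: "is_glb_in Fbar {s, g} minf" and as: "fle a s" and aF: "a \<in> Fbar" and g: "g \<in> Fbar"
  shows "is_glb_in Fbar {a, g} minf"
proof -
  have great: "\<And>y. y \<in> Fbar \<Longrightarrow> fle y s \<Longrightarrow> fle y g \<Longrightarrow> fle y minf"
    using h unfolding is_glb_in_def by auto
  show ?thesis unfolding is_glb_in_def
  proof (intro conjI)
    show "(minf :: 'a rfun) \<in> Fbar" using h unfolding is_glb_in_def by (elim conjE)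
    show "\<forall>x\<in>{a, g}. fle minf x" using minf_bot[OF aF] minf_bot[OF g] by simp
    show "\<forall>y\<in>Fbar. (\<forall>x\<in>{a, g}. fle y x) \<longrightarrow> fle y minf"
    proof (intro ballI impI)
      fix y assume y: "y \<in> Fbar" and yu: "\<forall>x\<in>{a, g}. fle y x"
      have "fle y a" "fle y g" using yu by simp_all
      thus "fle y minf" using great[OF y] fle_trans[OF _ as] by simp
    qed
  qed
qed

lemma FL_convex:
  assumes a: "a \<in> FL" and b: "b \<in> FL" and s: "s \<in> Fbar" and as: "fle a s" and sb: "fle s b"
  shows "s \<in> FL"
proof -
  have aF: "a \<in> Fbar" and bF: "b \<in> Fbar" using a b FL_sub by auto
  have "\<forall>g\<in>Fbar. (is_lub_in Fbar {s, g} pinf \<longrightarrow> g = pinf) \<and> (is_glb_in Fbar {s, g} minf \<longrightarrow> g = minf)"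
  proof (intro ballI conjI impI)
    fix g assume g: "g \<in> Fbar" and h: "is_lub_in Fbar {s, g} pinf"
    show "g = pinf" by (rule FL_lub[OF b g lub_mono_pinf[OF h sb bF g]])
  next
    fix g assume g: "g \<in> Fbar" and h: "is_glb_in Fbar {s, g} minf"
    show "g = minf" by (rule FL_glb[OF a g glb_mono_minf[OF h as aF g]])
  qed
  thus ?thesis using s unfolding FL_def by simp
qed

theorem proposition6p1:
  fixes A :: "('a::complete_lattice) rfun set"
  assumes "is_frame TYPE('a)"
  shows "(A \<subseteq> FL \<and> A \<noteq> {} \<and> (\<exists>b\<in>FL. \<forall>a\<in>A. fle a b) \<longrightarrow> (\<exists>s. is_lub_in FL A s)) \<and>
         (A \<subseteq> FL \<and> A \<noteq> {} \<and> (\<exists>b\<in>FL. \<forall>a\<in>A. fle b a) \<longrightarrow> (\<exists>s. is_glb_in FL A s))"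
proof (intro conjI impI)
  assume H: "A \<subseteq> FL \<and> A \<noteq> {} \<and> (\<exists>b\<in>FL. \<forall>a\<in>A. fle a b)"
  hence AF: "A \<subseteq> FL" and ne: "A \<noteq> {}" and ex: "\<exists>b\<in>FL. \<forall>a\<in>A. fle a b" by simp_all
  from ex obtain b where b: "b \<in> FL" "\<forall>a\<in>A. fle a b" by (elim bexE) simp
  from ne obtain a0 where a0: "a0 \<in> A" by auto
  have AFb: "A \<subseteq> Fbar" using AF FL_sub by (rule subset_trans)
  define s where "s = (lubUU A, lubD A)"
  have L: "s \<in> Fbar \<and> (\<forall>a\<in>A. fle a s) \<and> (\<forall>g\<in>Fbar. (\<forall>a\<in>A. fle a g) \<longrightarrow> fle s g)"
    unfolding s_def by (rule lub_Fbar[OF assms AFb])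
  hence sF: "s \<in> Fbar" and ub: "\<forall>a\<in>A. fle a s" and le: "\<forall>g\<in>Fbar. (\<forall>a\<in>A. fle a g) \<longrightarrow> fle s g"
    by simp_all
  have a0FL: "a0 \<in> FL" using AF a0 by (rule subsetD)
  have bF: "b \<in> Fbar" using FL_sub b(1) by (rule subsetD)
  have "s \<in> FL"
    by (rule FL_convex[OF a0FL b(1) sF]) (use ub a0 le bF b(2) in blast)+
  moreover have "\<forall>y\<in>FL. (\<forall>a\<in>A. fle a y) \<longrightarrow> fle s y"
    using le FL_sub by blast
  ultimately have "is_lub_in FL A s" unfolding is_lub_in_def using ub by simp
  thus "\<exists>s. is_lub_in FL A s" by (rule exI)
next
  assume H: "A \<subseteq> FL \<and> A \<noteq> {} \<and> (\<exists>b\<in>FL. \<forall>a\<in>A. fle b a)"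
  hence AF: "A \<subseteq> FL" and ne: "A \<noteq> {}" and ex: "\<exists>b\<in>FL. \<forall>a\<in>A. fle b a" by simp_all
  from ex obtain b where b: "b \<in> FL" "\<forall>a\<in>A. fle b a" by (elim bexE) simp
  from ne obtain a0 where a0: "a0 \<in> A" by auto
  have AFb: "A \<subseteq> Fbar" using AF FL_sub by (rule subset_trans)
  define s where "s = (glbU A, glbDD A)"
  have L: "s \<in> Fbar \<and> (\<forall>a\<in>A. fle s a) \<and> (\<forall>g\<in>Fbar. (\<forall>a\<in>A. fle g a) \<longrightarrow> fle g s)"
    unfolding s_def by (rule glb_Fbar[OF assms AFb])
  hence sF: "s \<in> Fbar" and lb: "\<forall>a\<in>A. fle s a" and ge: "\<forall>g\<in>Fbar. (\<forall>a\<in>A. fle g a) \<longrightarrow> fle g s"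
    by simp_all
  have a0FL: "a0 \<in> FL" using AF a0 by (rule subsetD)
  have bF: "b \<in> Fbar" using FL_sub b(1) by (rule subsetD)
  have "s \<in> FL"
    by (rule FL_convex[OF b(1) a0FL sF]) (use lb a0 ge bF b(2) in blast)+
  moreover have "\<forall>y\<in>FL. (\<forall>a\<in>A. fle y a) \<longrightarrow> fle y s"
    using ge FL_sub by blast
  ultimately have "is_glb_in FL A s" unfolding is_glb_in_def using lb by simp
  thus "\<exists>s. is_glb_in FL A s" by (rule exI)
qed


end
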